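(* Consider the data-selling model described in the context, with network $G$ on $n$ buyers and cost $\gamma>0$. Suppose $G$ is not a disjoint union of complete graphs (this includes the case that $G$ is not complete). For $z_0>0$ define: - $z^o(z_0)=\sqrt{\alpha(G)/\gamma}-z_0$, the precision of the seller-optimal contract; - $z^*(z_0)$, the precision of the socially efficient contract, i.e. the positive solution $z$ of $$\sum_{i\in N}\frac{n_i+1}{(z_0+(n_i+1)z)^2}=\gamma.$$ Then there exists $\bar z>0$ such that $z^*(z_0)<z^o(z_0)$ for all $z_0\in(0,\bar z)$.
   Context: $N=\{1,\dots,n\}$ is the set of buyers and $G$ is an undirected simple network on $N$. $n_i$ denotes the degree (number of neighbors) of buyer $i$ in $G$. $\alpha(G)$ is the independence number of $G$, the largest size of a set of nodes no two of which are adjacent. A graph is a disjoint union of complete graphs if each of its connected components is a complete graph. Setting: the state is $\theta\sim N(0,1/z_0)$. A seller sells a common-precision signal $\theta+\varepsilon_i$, with $\varepsilon_i\sim N(0,1/z)$, to a target set of buyers at marginal cost $\gamma z$. Buyers share signals with their network neighbors and have quadratic loss $-(a_i-\theta)^2$. In this setting the seller-optimal precision is $z^o$ and the welfare-maximizing precision is $z^*$, as defined in the claim. *)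

theory Defs
  imports Complex_Main
begin

definition simple_graph :: "nat \<Rightarrow> (nat \<Rightarrow> nat \<Rightarrow> bool) \<Rightarrow> bool" where
  "simple_graph n E \<longleftrightarrow>
     (\<forall>i j. E i j \<longrightarrow> i \<in> {1..n} \<and> j \<in> {1..n}) \<and>
     (\<forall>i j. E i j \<longrightarrow> E j i) \<and> (\<forall>i. \<not> E i i)"

definition degree :: "nat \<Rightarrow> (nat \<Rightarrow> nat \<Rightarrow> bool) \<Rightarrow> nat \<Rightarrow> nat" where
  "degree n E i = card {j \<in> {1..n}. E i j}"

definition independent_set :: "nat \<Rightarrow> (nat \<Rightarrow> nat \<Rightarrow> bool) \<Rightarrow> nat set \<Rightarrow> bool" where
  "independent_set n E S \<longleftrightarrow> S \<subseteq> {1..n} \<and> (\<forall>i\<in>S. \<forall>j\<in>S. \<not> E i j)"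

definition independence_number :: "nat \<Rightarrow> (nat \<Rightarrow> nat \<Rightarrow> bool) \<Rightarrow> nat" where
  "independence_number n E = Max {card S | S. independent_set n E S}"

text \<open>Each connected component is complete iff adjacency is transitive on distinct vertices.\<close>
definition disjoint_union_of_cliques :: "nat \<Rightarrow> (nat \<Rightarrow> nat \<Rightarrow> bool) \<Rightarrow> bool" where
  "disjoint_union_of_cliques n E \<longleftrightarrow>
     (\<forall>i\<in>{1..n}. \<forall>j\<in>{1..n}. \<forall>k\<in>{1..n}. E i j \<and> E j k \<and> i \<noteq> k \<longrightarrow> E i k)"

definition z_seller :: "nat \<Rightarrow> (nat \<Rightarrow> nat \<Rightarrow> bool) \<Rightarrow> real \<Rightarrow> real \<Rightarrow> real" where
  "z_seller n E \<gamma> z0 = sqrt (real (independence_number n E) / \<gamma>) - z0"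

definition welfare_foc :: "nat \<Rightarrow> (nat \<Rightarrow> nat \<Rightarrow> bool) \<Rightarrow> real \<Rightarrow> real \<Rightarrow> real \<Rightarrow> bool" where
  "welfare_foc n E \<gamma> z0 z \<longleftrightarrow>
     (\<Sum>i\<in>{1..n}. (real (degree n E i) + 1) / (z0 + (real (degree n E i) + 1) * z)\<^sup>2) = \<gamma>"

definition z_welfare :: "nat \<Rightarrow> (nat \<Rightarrow> nat \<Rightarrow> bool) \<Rightarrow> real \<Rightarrow> real \<Rightarrow> real" where
  "z_welfare n E \<gamma> z0 = (THE z. z > 0 \<and> welfare_foc n E \<gamma> z0 z)"

end

theory Submission
  imports Defs
begin

definition dg :: "(nat \<Rightarrow> nat \<Rightarrow> bool) \<Rightarrow> nat set \<Rightarrow> nat \<Rightarrow> nat" where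
  "dg E V u = card {w\<in>V. E u w}"
definition SS :: "(nat \<Rightarrow> nat \<Rightarrow> bool) \<Rightarrow> nat set \<Rightarrow> real" where
  "SS E V = (\<Sum>u\<in>V. 1 / (real (dg E V u) + 1))"
definition cliq :: "(nat \<Rightarrow> nat \<Rightarrow> bool) \<Rightarrow> nat set \<Rightarrow> bool" where
  "cliq E V \<longleftrightarrow> (\<forall>i\<in>V. \<forall>j\<in>V. \<forall>k\<in>V. E i j \<and> E j k \<and> i \<noteq> k \<longrightarrow> E i k)"

lemma caro_wei:
  assumes "finite V" and sym: "\<And>u w. E u w \<Longrightarrow> E w u" and irr: "\<And>u. \<not> E u u"
  shows "\<exists>I\<subseteq>V. (\<forall>i\<in>I. \<forall>j\<in>I. \<not> E i j) \<and> SS E V \<le> card I \<and> (\<not> cliq E V \<longrightarrow> SS E V < card I)"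
  using assms(1)
proof (induction V rule: finite_psubset_induct)
  case (psubset V)
  show ?case
  proof (cases "V = {}")
    case True
    then show ?thesis by (auto simp: SS_def cliq_def)
  next
    case False
    define d where "d = Min (dg E V ` V)"
    have "d \<in> dg E V ` V" unfolding d_def using False psubset.hyps by auto
    then obtain v where vV: "v \<in> V" and dv: "dg E V v = d" by auto
    have dmin: "\<And>u. u \<in> V \<Longrightarrow> d \<le> dg E V u" unfolding d_def using psubset.hyps by auto
    define Nb where "Nb = {w\<in>V. E v w}"
    define Nv where "Nv = insert v Nb"
    define V' where "V' = V - Nv"
    have finNb: "finite Nb" using psubset.hyps Nb_def by auto
    have vNb: "v \<notin> Nb" using irr Nb_def by auto
    have cardNv: "card Nv = d + 1" using finNb vNb dv Nv_def Nb_def dg_def by simp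
    have NvV: "Nv \<subseteq> V" using vV Nv_def Nb_def by auto
    have V'sub: "V' \<subset> V" using vV V'_def Nv_def by auto
    obtain I' where I'V: "I' \<subseteq> V'" and I'ind: "\<forall>i\<in>I'. \<forall>j\<in>I'. \<not> E i j"
       and I'S: "SS E V' \<le> card I'" and I'str: "\<not> cliq E V' \<longrightarrow> SS E V' < card I'"
      using psubset.IH[OF V'sub] by blast
    define I where "I = insert v I'"
    have vI': "v \<notin> I'" using I'V V'_def Nv_def by auto
    have finV': "finite V'" using V'_def psubset.hyps by simp
    have finI': "finite I'" using finite_subset[OF I'V finV'] .
    have cardI: "card I = card I' + 1" using vI' finI' I_def by simp
    have noadj: "\<And>w. w \<in> V' \<Longrightarrow> \<not> E v w" using V'_def Nv_def Nb_def by auto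
    have Iind: "\<forall>i\<in>I. \<forall>j\<in>I. \<not> E i j"
    proof (intro ballI)
      fix i j assume i: "i \<in> I" and j: "j \<in> I"
      show "\<not> E i j"
      proof (cases "i = v")
        case True
        then show ?thesis using j irr noadj I'V unfolding I_def by auto
      next
        case False
        then have iI: "i \<in> I'" using i I_def by auto
        show ?thesis
        proof (cases "j = v")
          case True
          then show ?thesis using iI noadj I'V sym by blast
        next
          case False
          then show ?thesis using iI j I'ind I_def by auto
        qed
      qed
    qed
    have IV: "I \<subseteq> V" using I'V V'sub vV I_def by auto
    define f where "f = (\<lambda>u. 1 / (real (dg E V u) + 1))"
    define f' where "f' = (\<lambda>u. 1 / (real (dg E V' u) + 1))"
    have split: "SS E V = sum f Nv + sum f V'"
      unfolding SS_def f_def[symmetric] V'_def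
      using sum.subset_diff[OF NvV psubset.hyps, of f] by simp
    have f_le: "\<And>u. u \<in> Nv \<Longrightarrow> f u \<le> 1 / (real d + 1)"
      unfolding f_def using dmin NvV by (auto simp: frac_le)
    have s1: "sum f Nv \<le> 1"
    proof -
      have "sum f Nv \<le> sum (\<lambda>_. 1 / (real d + 1)) Nv" by (rule sum_mono) (rule f_le)
      also have "\<dots> = 1" using cardNv by simp
      finally show ?thesis .
    qed
    have dgle: "\<And>u. dg E V' u \<le> dg E V u"
      unfolding dg_def using V'sub psubset.hyps by (intro card_mono) auto
    have f_f': "\<And>u. f u \<le> f' u"
      unfolding f_def f'_def using dgle by (auto simp: frac_le)
    have s2: "sum f V' \<le> SS E V'" unfolding SS_def f'_def[symmetric] using f_f' by (simp add: sum_mono)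
    have le: "SS E V \<le> card I" using split s1 s2 I'S cardI by simp
    have strict: "SS E V < card I" if nc: "\<not> cliq E V"
    proof (rule ccontr)
      assume "\<not> SS E V < card I"
      then have eq: "SS E V = card I" using le by simp
      have e1: "sum f Nv = 1" and e2: "sum f V' = SS E V'" and cV': "cliq E V'"
        using eq split s1 s2 I'S I'str cardI by force+
      have fd: "\<And>u. u \<in> Nv \<Longrightarrow> dg E V u = d"
      proof (rule ccontr)
        fix u assume uN: "u \<in> Nv" and ne: "dg E V u \<noteq> d"
        then have "d < dg E V u" using dmin NvV by force
        then have "f u < 1 / (real d + 1)" unfolding f_def by (auto simp: frac_less2)
        then have "sum f Nv < sum (\<lambda>_. 1 / (real d + 1)) Nv"
          using f_le uN finNb Nv_def by (intro sum_strict_mono_ex1) auto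
        also have "\<dots> = 1" using cardNv by simp
        finally show False using e1 by simp
      qed
      have sep: "\<And>u w. u \<in> V' \<Longrightarrow> w \<in> Nv \<Longrightarrow> \<not> E u w"
      proof
        fix u w assume uV: "u \<in> V'" and wN: "w \<in> Nv" and Euw: "E u w"
        have fin: "finite {w\<in>V. E u w}" using psubset.hyps by auto
        have "{w\<in>V'. E u w} \<subset> {w\<in>V. E u w}" using V'sub wN Euw NvV V'_def by auto
        then have "dg E V' u < dg E V u" unfolding dg_def using fin psubset_card_mono by blast
        then have "f u < f' u" unfolding f_def f'_def by (auto simp: frac_less2)
        then have "sum f V' < sum f' V'"
          using f_f' uV V'sub psubset.hyps finite_subset by (intro sum_strict_mono_ex1) auto
        then show False using e2 unfolding SS_def f'_def by simp
      qed
      have nbr: "\<And>u. u \<in> Nv \<Longrightarrow> {w\<in>V. E u w} = Nv - {u}"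
      proof -
        fix u assume uN: "u \<in> Nv"
        have sub: "{w\<in>V. E u w} \<subseteq> Nv - {u}"
        proof
          fix w assume "w \<in> {w\<in>V. E u w}"
          then have wV: "w \<in> V" and Euw: "E u w" by auto
          have "w \<noteq> u" using Euw irr by auto
          moreover have "w \<in> Nv"
          proof (rule ccontr)
            assume "w \<notin> Nv"
            then have "w \<in> V'" using wV V'_def by auto
            then show False using sep[OF _ uN] sym[OF Euw] by blast
          qed
          ultimately show "w \<in> Nv - {u}" by simp
        qed
        have "card {w\<in>V. E u w} = card (Nv - {u})"
          using fd[OF uN] cardNv uN finNb Nv_def dg_def by simp
        then show "{w\<in>V. E u w} = Nv - {u}"
          using sub finNb Nv_def by (intro card_subset_eq) auto
      qed
      have "cliq E V"
        unfolding cliq_def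
      proof (intro ballI impI)
        fix i j k assume iV: "i \<in> V" and jV: "j \<in> V" and kV: "k \<in> V" and h: "E i j \<and> E j k \<and> i \<noteq> k"
        show "E i k"
        proof (cases "j \<in> Nv")
          case True
          have "E j i" using h sym by blast
          then have iN: "i \<in> Nv" using nbr[OF True] iV by blast
          have kN: "k \<in> Nv" using nbr[OF True] h kV by blast
          have "k \<in> Nv - {i}" using kN h by simp
          then show ?thesis using nbr[OF iN] by blast
        next
          case False
          then have jV': "j \<in> V'" using jV V'_def by auto
          have "E j i" using h sym by blast
          then have "i \<notin> Nv" using sep[OF jV'] by blast
          then have iV': "i \<in> V'" using iV V'_def by simp
          have "k \<notin> Nv" using sep[OF jV'] h by blast
          then have kV': "k \<in> V'" using kV V'_def by simp
          note iV' kV'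
          then show ?thesis using cV' jV' h unfolding cliq_def by blast
        qed
      qed
      then show False using nc by simp
    qed
    show ?thesis using IV Iind le strict by blast
  qed
qed


lemma alpha_ge:
  assumes "I \<subseteq> {1..n}" "\<forall>i\<in>I. \<forall>j\<in>I. \<not> E i j"
  shows "card I \<le> independence_number n E"
proof -
  have "{card S | S. independent_set n E S} \<subseteq> card ` Pow {1..n}"
    unfolding independent_set_def by auto
  then have fin: "finite {card S | S. independent_set n E S}" using finite_subset by blast
  have "card I \<in> {card S | S. independent_set n E S}"
    using assms unfolding independent_set_def by blast
  then show ?thesis unfolding independence_number_def using fin by (rule Max_ge[rotated])
qed

theorem theorem2:
  fixes n :: nat and E :: "nat \<Rightarrow> nat \<Rightarrow> bool" and \<gamma> :: real
  assumes "simple_graph n E"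
    and "\<not> disjoint_union_of_cliques n E"
    and "\<gamma> > 0"
  shows "\<exists>zbar > 0. \<forall>z0. 0 < z0 \<and> z0 < zbar \<longrightarrow>
           z_welfare n E \<gamma> z0 < z_seller n E \<gamma> z0"
proof -
  have sym: "\<And>u w. E u w \<Longrightarrow> E w u" and irr: "\<And>u. \<not> E u u"
    using assms(1) unfolding simple_graph_def by auto
  have ncl: "\<not> cliq E {1..n}" using assms(2) unfolding cliq_def disjoint_union_of_cliques_def .
  obtain I where IV: "I \<subseteq> {1..n}" and Iind: "\<forall>i\<in>I. \<forall>j\<in>I. \<not> E i j"
    and Istr: "SS E {1..n} < card I"
    using caro_wei[of "{1..n}" E, OF _ sym irr] ncl by auto
  define c where "c = (\<lambda>i. real (degree n E i) + 1)"
  have c1: "\<And>i. c i \<ge> 1" unfolding c_def by simp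
  define S where "S = (\<Sum>i\<in>{1..n}. 1 / c i)"
  have S_eq: "S = SS E {1..n}" unfolding S_def SS_def c_def dg_def degree_def by simp
  define \<alpha> where "\<alpha> = real (independence_number n E)"
  have Sa: "S < \<alpha>" using Istr alpha_ge[OF IV Iind] S_eq \<alpha>_def by simp
  have ne: "{1..n} \<noteq> {}" using ncl unfolding cliq_def by auto
  have Spos: "S > 0" unfolding S_def using ne c1
    by (intro sum_pos) (auto intro: divide_pos_pos less_le_trans[OF zero_less_one])
  define A where "A = sqrt (\<alpha> / \<gamma>)"
  define B where "B = sqrt (S / \<gamma>)"
  have Bpos: "B > 0" unfolding B_def using Spos assms(3) by simp
  have BA: "B < A" unfolding A_def B_def using Sa assms(3) by (simp add: divide_strict_right_mono)
  have B2: "B\<^sup>2 = S / \<gamma>" unfolding B_def using Spos assms(3) by simp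
  show ?thesis
  proof (intro exI[of _ "min (A - B) B"] conjI allI impI)
    show "min (A - B) B > 0" using BA Bpos by simp
    fix z0 :: real assume z0: "0 < z0 \<and> z0 < min (A - B) B"
    define f where "f = (\<lambda>z. \<Sum>i\<in>{1..n}. c i / (z0 + c i * z)\<^sup>2)"
    have foc: "\<And>z. welfare_foc n E \<gamma> z0 z \<longleftrightarrow> f z = \<gamma>"
      unfolding welfare_foc_def f_def c_def by simp
    have den: "\<And>i z. z \<ge> 0 \<Longrightarrow> z0 + c i * z > 0"
      using z0 c1 by (smt (verit) mult_nonneg_nonneg)
    have den2: "\<And>i z. z \<ge> 0 \<Longrightarrow> (z0 + c i * z)\<^sup>2 \<noteq> 0"
      using den by (metis less_irrefl zero_less_power2 power_not_zero)
    have cont: "continuous_on {0..B} f"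
      unfolding f_def
      by (intro continuous_intros ballI den2) auto
    have f0: "f 0 > \<gamma>"
    proof -
      have "S / z0\<^sup>2 \<le> f 0"
        unfolding S_def f_def sum_divide_distrib
      proof (intro sum_mono)
        fix i assume "i \<in> {1..n}"
        have ci: "c i \<ge> 1" by (rule c1)
        have cc: "1 \<le> c i * c i" using mult_mono[OF ci ci] ci by simp
        have "1 / c i \<le> c i" using ci cc by (simp add: divide_le_eq)
        then show "1 / c i / z0\<^sup>2 \<le> c i / (z0 + c i * 0)\<^sup>2" using z0
          by (simp add: divide_right_mono del: divide_divide_eq_left)
      qed
      moreover have "\<gamma> < S / z0\<^sup>2"
      proof -
        have "z0\<^sup>2 < B\<^sup>2" using z0 by (intro power_strict_mono) auto
        then have "z0\<^sup>2 < S / \<gamma>" using B2 by simp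
        then show ?thesis using z0 assms(3) by (simp add: field_simps)
      qed
      ultimately show ?thesis by simp
    qed
    have fbound: "\<And>z. z > 0 \<Longrightarrow> f z < S / z\<^sup>2"
    proof -
      fix z :: real assume zp: "z > 0"
      have "f z < (\<Sum>i\<in>{1..n}. 1 / c i / z\<^sup>2)"
        unfolding f_def
      proof (rule sum_strict_mono[OF _ ne])
        fix i assume "i \<in> {1..n}"
        have ci: "c i \<ge> 1" by (rule c1)
        have "(c i * z)\<^sup>2 < (z0 + c i * z)\<^sup>2"
          using zp ci z0 by (intro power_strict_mono) auto
        then have "c i / (z0 + c i * z)\<^sup>2 < c i / (c i * z)\<^sup>2"
        proof (rule divide_strict_left_mono)
          have "0 < c i * z" using zp ci by simp
          then show "0 < (z0 + c i * z)\<^sup>2 * (c i * z)\<^sup>2" using den[of z i] zp ci by (intro mult_pos_pos zero_less_power) auto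
        qed (use ci in auto)
        also have "\<dots> = 1 / c i / z\<^sup>2" using ci zp by (simp add: power2_eq_square field_simps)
        finally show "c i / (z0 + c i * z)\<^sup>2 < 1 / c i / z\<^sup>2" .
      qed simp
      also have "\<dots> = S / z\<^sup>2" unfolding S_def sum_divide_distrib ..
      finally show "f z < S / z\<^sup>2" .
    qed
    have fB: "f B < \<gamma>" using fbound[OF Bpos] B2 Spos assms(3) by simp
    have mono: "\<And>x y. 0 \<le> x \<Longrightarrow> x < y \<Longrightarrow> f y < f x"
    proof -
      fix x y :: real assume x: "0 \<le> x" and xy: "x < y"
      show "f y < f x" unfolding f_def
      proof (rule sum_strict_mono[OF _ ne])
        fix i assume "i \<in> {1..n}"
        have ci: "c i \<ge> 1" by (rule c1)
        have "c i * x < c i * y" using ci xy by simp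
        then have "(z0 + c i * x)\<^sup>2 < (z0 + c i * y)\<^sup>2"
          using den[OF x, of i] by (intro power_strict_mono) auto
        then show "c i / (z0 + c i * y)\<^sup>2 < c i / (z0 + c i * x)\<^sup>2"
          using ci den[OF x, of i] den[of y i] x xy
          by (intro divide_strict_left_mono mult_pos_pos zero_less_power) auto
      qed simp
    qed
    obtain x where x0: "x \<ge> 0" and xB: "x \<le> B" and fx: "f x = \<gamma>"
      using IVT2'[of f B \<gamma> 0] fB f0 Bpos cont by auto
    have xpos: "x > 0" using x0 fx f0 by (cases "x = 0") auto
    have zw: "z_welfare n E \<gamma> z0 = x"
      unfolding z_welfare_def
    proof (rule the_equality)
      show "0 < x \<and> welfare_foc n E \<gamma> z0 x" using xpos fx foc by simp
      fix y assume "0 < y \<and> welfare_foc n E \<gamma> z0 y"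
      then have yp: "y > 0" and fy: "f y = \<gamma>" using foc by auto
      show "y = x"
      proof (rule ccontr)
        assume "y \<noteq> x"
        then have "y < x \<or> x < y" by linarith
        then show False using mono[of y x] mono[of x y] yp xpos fx fy by auto
      qed
    qed
    have "x < B"
    proof -
      have "\<gamma> < S / x\<^sup>2" using fbound[OF xpos] fx by simp
      then have "x\<^sup>2 < S / \<gamma>" using xpos assms(3) by (simp add: field_simps)
      then have "x\<^sup>2 < B\<^sup>2" using B2 by simp
      then show ?thesis using Bpos xpos by (simp add: power_less_imp_less_base)
    qed
    then show "z_welfare n E \<gamma> z0 < z_seller n E \<gamma> z0"
      unfolding zw z_seller_def A_def[symmetric] \<alpha>_def[symmetric] using z0 by simp
  qed
qed

end
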